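(* Let $(G,\sigma)$ be a connected RBMG with exactly three colors $r,s,t$ that contains an induced $6$-cycle $\langle x_1y_1z_1x_2y_2z_2\rangle$ with $\sigma(x_1)=\sigma(x_2)=r$, $\sigma(y_1)=\sigma(y_2)=s$, $\sigma(z_1)=\sigma(z_2)=t$. Then every leaf-colored tree $(T,\sigma)$ that explains $(G,\sigma)$ has the following property: with $v:=\mathrm{lca}_T(x_1,x_2,y_1,y_2,z_1,z_2)$ there exist three distinct children $v_1,v_2,v_3\in\mathrm{child}(v)$ such that either $x_1,y_1\preceq_T v_1$, $x_2,z_1\preceq_T v_2$, $y_2,z_2\preceq_T v_3$, or $y_1,z_1\preceq_T v_1$, $x_2,y_2\preceq_T v_2$, $x_1,z_2\preceq_T v_3$.
   Context: A planted phylogenetic tree $T$ is a rooted tree with distinguished root $0_T$ of degree $1$, all other non-leaf vertices of degree $\ge3$; $L(T)$ its leaves (excluding $0_T$), $|L(T)|\ge2$. $\preceq_T$ is the ancestor order towards $0_T$; $T(v)$, $\mathrm{child}(v)$, $\mathrm{lca}_T$ as usual. $\sigma$ maps $L(T)$ to a set of colors. $y$ is a best match of $x$ if $\sigma(x)\ne\sigma(y)$ and $\mathrm{lca}_T(x,y)\preceq_T\mathrm{lca}_T(x,y')$ for all $y'$ with $\sigma(y')=\sigma(y)$. The RBMG $G(T,\sigma)$ is the vertex-colored undirected graph on $L(T)$ whose edges are reciprocal best match pairs; a vertex-colored graph $(G,\sigma)$ is an RBMG if it equals $G(T,\sigma)$ for some leaf-colored tree $(T,\sigma)$, in which case $(T,\sigma)$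 explains $(G,\sigma)$. The cycle $\langle x_1y_1z_1x_2y_2z_2\rangle$ has edges $x_1y_1,y_1z_1,z_1x_2,x_2y_2,y_2z_2,z_2x_1$, and induced means no other edges among these six vertices. *)

theory Defs
  imports Main
begin

text \<open>A rooted tree is given by a finite vertex set V, a set E of edges directed
  away from the root (pairs (parent, child)), and a root rt.\<close>

definition children :: "('v \<times> 'v) set \<Rightarrow> 'v \<Rightarrow> 'v set" where
  "children E v = {u. (v, u) \<in> E}"

definition leaves :: "'v set \<Rightarrow> ('v \<times> 'v) set \<Rightarrow> 'v \<Rightarrow> 'v set" where
  "leaves V E rt = {v \<in> V. v \<noteq> rt \<and> children E v = {}}"

definition rooted_tree :: "'v set \<Rightarrow> ('v \<times> 'v) set \<Rightarrow> 'v \<Rightarrow> bool" where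
  "rooted_tree V E rt \<longleftrightarrow> finite V \<and> rt \<in> V \<and> E \<subseteq> V \<times> V
     \<and> (\<forall>v\<in>V. (rt, v) \<in> E\<^sup>*)
     \<and> (\<forall>u. (u, rt) \<notin> E)
     \<and> (\<forall>v\<in>V - {rt}. \<exists>!u. (u, v) \<in> E)"

text \<open>Planted phylogenetic tree: root of degree 1 (exactly one child), every other
  non-leaf vertex has degree at least 3 (at least two children), and at least two leaves.\<close>

definition planted_phylo_tree :: "'v set \<Rightarrow> ('v \<times> 'v) set \<Rightarrow> 'v \<Rightarrow> bool" where
  "planted_phylo_tree V E rt \<longleftrightarrow> rooted_tree V E rt
     \<and> card (children E rt) = 1
     \<and> (\<forall>v\<in>V - {rt}. children E v \<noteq> {} \<longrightarrow> card (children E v) \<ge> 2)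
     \<and> card (leaves V E rt) \<ge> 2"

definition anc_le :: "('v \<times> 'v) set \<Rightarrow> 'v \<Rightarrow> 'v \<Rightarrow> bool" where
  "anc_le E x y \<longleftrightarrow> (y, x) \<in> E\<^sup>*"

definition lca :: "'v set \<Rightarrow> ('v \<times> 'v) set \<Rightarrow> 'v set \<Rightarrow> 'v" where
  "lca V E A = (THE w. w \<in> V \<and> (\<forall>a\<in>A. anc_le E a w)
       \<and> (\<forall>u\<in>V. (\<forall>a\<in>A. anc_le E a u) \<longrightarrow> anc_le E w u))"

definition best_match :: "'v set \<Rightarrow> ('v \<times> 'v) set \<Rightarrow> 'v \<Rightarrow> ('v \<Rightarrow> 'c) \<Rightarrow> 'v \<Rightarrow> 'v \<Rightarrow> bool" where
  "best_match V E rt \<sigma> x y \<longleftrightarrow> x \<in> leaves V E rt \<and> y \<in> leaves V E rt \<and> \<sigma> x \<noteq> \<sigma> y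
     \<and> (\<forall>y'\<in>leaves V E rt. \<sigma> y' = \<sigma> y \<longrightarrow> anc_le E (lca V E {x, y}) (lca V E {x, y'}))"

definition explains :: "'v set \<Rightarrow> ('v \<times> 'v) set \<Rightarrow> 'v \<Rightarrow> ('v \<Rightarrow> 'c) \<Rightarrow> 'v set \<Rightarrow> ('v \<times> 'v) set \<Rightarrow> bool" where
  "explains V E rt \<sigma> X EG \<longleftrightarrow> planted_phylo_tree V E rt \<and> X = leaves V E rt
     \<and> (\<forall>x y. (x, y) \<in> EG \<longleftrightarrow> best_match V E rt \<sigma> x y \<and> best_match V E rt \<sigma> y x)"

definition is_RBMG :: "'v set \<Rightarrow> ('v \<times> 'v) set \<Rightarrow> ('v \<Rightarrow> 'c) \<Rightarrow> bool" where
  "is_RBMG X EG \<sigma> \<longleftrightarrow> (\<exists>V E rt. explains V E rt \<sigma> X EG)"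

definition graph_connected :: "'v set \<Rightarrow> ('v \<times> 'v) set \<Rightarrow> bool" where
  "graph_connected X EG \<longleftrightarrow> (\<forall>x\<in>X. \<forall>y\<in>X. (x, y) \<in> (EG \<inter> X \<times> X)\<^sup>*)"

definition induced_6cycle :: "'v set \<Rightarrow> ('v \<times> 'v) set \<Rightarrow> 'v list \<Rightarrow> bool" where
  "induced_6cycle X EG cs \<longleftrightarrow> length cs = 6 \<and> distinct cs \<and> set cs \<subseteq> X
     \<and> (\<forall>i<6. \<forall>j<6. (cs ! i, cs ! j) \<in> EG \<longleftrightarrow> (j = (i + 1) mod 6 \<or> i = (j + 1) mod 6))"

end

theory Submission
  imports Defs
begin

definition dst :: "('v \<times> 'v) set \<Rightarrow> 'v \<Rightarrow> 'v \<Rightarrow> nat" where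
  "dst E rt v = (LEAST n. (rt, v) \<in> E ^^ n)"

definition Hc :: "'v set \<Rightarrow> ('v \<times> 'v) set \<Rightarrow> 'v \<Rightarrow> ('v \<Rightarrow> 'c) \<Rightarrow> 'v \<Rightarrow> 'c \<Rightarrow> bool" where
  "Hc V E rt \<sigma> c k = (\<exists>y\<in>leaves V E rt. \<sigma> y = k \<and> (c,y) \<in> E\<^sup>*)"

context
  fixes V :: "'v set" and E and rt
  assumes RT: "rooted_tree V E rt"
begin

lemma EV: "(u,w) \<in> E \<Longrightarrow> u \<in> V \<and> w \<in> V"
  using RT unfolding rooted_tree_def by blast

lemma dst_step: assumes "(u,w) \<in> E" shows "dst E rt w = Suc (dst E rt u)"
proof -
  have uV: "u \<in> V" and wV: "w \<in> V" using EV assms by auto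
  have "(rt,u) \<in> E\<^sup>*" using RT uV unfolding rooted_tree_def by blast
  then obtain n where "(rt,u) \<in> E^^n" using rtrancl_power by blast
  hence du: "(rt,u) \<in> E^^(dst E rt u)" unfolding dst_def by (rule LeastI)
  hence "(rt,w) \<in> E^^(Suc (dst E rt u))" using assms by auto
  hence le: "dst E rt w \<le> Suc (dst E rt u)" unfolding dst_def by (rule Least_le)
  have dw: "(rt,w) \<in> E^^(dst E rt w)" unfolding dst_def by (rule LeastI) fact
  have wrt: "w \<noteq> rt" using RT assms unfolding rooted_tree_def by blast
  have "dst E rt w \<noteq> 0" using dw wrt by (cases "dst E rt w") auto
  then obtain m where m: "dst E rt w = Suc m" by (cases "dst E rt w") auto
  with dw obtain p where p1: "(rt,p) \<in> E^^m" and p2: "(p,w) \<in> E" by auto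
  have "\<exists>!q. (q,w) \<in> E" using RT wV wrt unfolding rooted_tree_def by blast
  hence "p = u" using p2 assms by blast
  hence "dst E rt u \<le> m" using p1 unfolding dst_def by (simp add: Least_le)
  thus ?thesis using le m by simp
qed

lemma dst_trancl: "(u,w) \<in> E\<^sup>+ \<Longrightarrow> dst E rt u < dst E rt w"
proof (induction rule: trancl_induct)
  case (base y) thus ?case using dst_step by simp
next
  case (step y z) thus ?case using dst_step[of y z] by simp
qed

lemma no_cycle: "(u,u) \<notin> E\<^sup>+"
  using dst_trancl by blast

lemma antisym': "(u,w) \<in> E\<^sup>* \<Longrightarrow> (w,u) \<in> E\<^sup>* \<Longrightarrow> u = w"
  by (metis no_cycle rtrancl_eq_or_trancl rtrancl_trancl_trancl)



lemma chain_aux: "(b,x) \<in> E\<^sup>* \<Longrightarrow> (a,x) \<in> E\<^sup>* \<longrightarrow> (a,b) \<in> E\<^sup>* \<or> (b,a) \<in> E\<^sup>*"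
proof (induction rule: rtrancl_induct)
  case base thus ?case by simp
next
  case (step y z)
  show ?case
  proof
    assume az: "(a,z) \<in> E\<^sup>*"
    show "(a,b) \<in> E\<^sup>* \<or> (b,a) \<in> E\<^sup>*"
    proof (cases "a = z")
      case True thus ?thesis using step(1,2) by (meson rtrancl.rtrancl_into_rtrancl)
    next
      case False
      then obtain p where p1: "(a,p) \<in> E\<^sup>*" and p2: "(p,z) \<in> E"
        using az by (meson rtranclE)
      have zV: "z \<in> V" and zrt: "z \<noteq> rt" using EV step RT unfolding rooted_tree_def by auto
      have "\<exists>!q. (q,z) \<in> E" using RT zV zrt unfolding rooted_tree_def by blast
      hence "p = y" using p2 step by blast
      thus ?thesis using step p1 by blast
    qed
  qed
qed

lemma chain: "(a,x) \<in> E\<^sup>* \<Longrightarrow> (b,x) \<in> E\<^sup>* \<Longrightarrow> (a,b) \<in> E\<^sup>* \<or> (b,a) \<in> E\<^sup>*"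
  using chain_aux by blast

lemma lca_eq:
  assumes "w \<in> V" "\<forall>a\<in>A. anc_le E a w" "\<forall>u\<in>V. (\<forall>a\<in>A. anc_le E a u) \<longrightarrow> anc_le E w u"
  shows "lca V E A = w"
  unfolding lca_def
proof (rule the_equality)
  show "w \<in> V \<and> (\<forall>a\<in>A. anc_le E a w) \<and> (\<forall>u\<in>V. (\<forall>a\<in>A. anc_le E a u) \<longrightarrow> anc_le E w u)"
    using assms by blast
next
  fix w' assume "w' \<in> V \<and> (\<forall>a\<in>A. anc_le E a w') \<and> (\<forall>u\<in>V. (\<forall>a\<in>A. anc_le E a u) \<longrightarrow> anc_le E w' u)"
  thus "w' = w" using assms antisym' unfolding anc_le_def by blast
qed

lemma lca_ex:
  assumes "A \<subseteq> V" "A \<noteq> {}"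
  shows "\<exists>w. w \<in> V \<and> (\<forall>a\<in>A. anc_le E a w) \<and> (\<forall>u\<in>V. (\<forall>a\<in>A. anc_le E a u) \<longrightarrow> anc_le E w u)"
proof -
  define CA where "CA = {u\<in>V. \<forall>a\<in>A. (u,a) \<in> E\<^sup>*}"
  have fin: "finite CA" using RT unfolding CA_def rooted_tree_def by auto
  have "rt \<in> CA" using RT assms unfolding CA_def rooted_tree_def by blast
  hence ne: "CA \<noteq> {}" by blast
  define m where "m = Max (dst E rt ` CA)"
  have "m \<in> dst E rt ` CA" unfolding m_def using fin ne by simp
  then obtain w where wC: "w \<in> CA" and wm: "dst E rt w = m" by blast
  have mx: "\<forall>u\<in>CA. dst E rt u \<le> m" unfolding m_def using fin by simp
  obtain a0 where a0: "a0 \<in> A" using assms by blast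
  have "\<forall>u\<in>V. (\<forall>a\<in>A. anc_le E a u) \<longrightarrow> anc_le E w u"
  proof (intro ballI impI)
    fix u assume uV: "u \<in> V" and ua: "\<forall>a\<in>A. anc_le E a u"
    hence uC: "u \<in> CA" unfolding CA_def anc_le_def by blast
    have "(u,a0) \<in> E\<^sup>*" "(w,a0) \<in> E\<^sup>*" using uC wC a0 unfolding CA_def by auto
    hence "(u,w) \<in> E\<^sup>* \<or> (w,u) \<in> E\<^sup>*" using chain by blast
    moreover have "(w,u) \<in> E\<^sup>* \<Longrightarrow> w = u"
    proof (rule ccontr)
      assume "(w,u) \<in> E\<^sup>*" "w \<noteq> u"
      hence "(w,u) \<in> E\<^sup>+" by (simp add: rtrancl_eq_or_trancl)
      hence "dst E rt w < dst E rt u" by (rule dst_trancl)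
      thus False using mx uC wm by force
    qed
    ultimately show "anc_le E w u" unfolding anc_le_def by auto
  qed
  thus ?thesis using wC unfolding CA_def anc_le_def by blast
qed

lemma lca_prop:
  assumes "A \<subseteq> V" "A \<noteq> {}"
  shows "lca V E A \<in> V \<and> (\<forall>a\<in>A. anc_le E a (lca V E A)) \<and> (\<forall>u\<in>V. (\<forall>a\<in>A. anc_le E a u) \<longrightarrow> anc_le E (lca V E A) u)"
  using lca_ex[OF assms] lca_eq by metis

lemma child_uniq:
  assumes "(v,c) \<in> E" "(v,c') \<in> E" "(c,a) \<in> E\<^sup>*" "(c',a) \<in> E\<^sup>*" shows "c = c'"
proof (rule ccontr)
  assume ne: "c \<noteq> c'"
  have d: "dst E rt c = dst E rt c'" using dst_step assms by metis
  from chain[OF assms(3,4)] have "(c,c') \<in> E\<^sup>+ \<or> (c',c) \<in> E\<^sup>+"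
    using ne by (auto simp: rtrancl_eq_or_trancl)
  thus False using dst_trancl d by force
qed


lemma lca_pair:
  assumes "(v,ca) \<in> E" "(v,cb) \<in> E" "(ca,a) \<in> E\<^sup>*" "(cb,b) \<in> E\<^sup>*" "ca \<noteq> cb"
  shows "lca V E {a,b} = v"
proof (rule lca_eq)
  show "v \<in> V" using EV assms by blast
  have "(v,a) \<in> E\<^sup>*" "(v,b) \<in> E\<^sup>*" using assms by (meson converse_rtrancl_into_rtrancl)+
  thus "\<forall>x\<in>{a,b}. anc_le E x v" unfolding anc_le_def by blast
  show "\<forall>u\<in>V. (\<forall>x\<in>{a,b}. anc_le E x u) \<longrightarrow> anc_le E v u"
  proof (intro ballI impI)
    fix u assume "u \<in> V" and h: "\<forall>x\<in>{a,b}. anc_le E x u"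
    have ua: "(u,a) \<in> E\<^sup>*" and ub: "(u,b) \<in> E\<^sup>*" using h unfolding anc_le_def by auto
    have va: "(v,a) \<in> E\<^sup>*" using assms by (meson converse_rtrancl_into_rtrancl)
    show "anc_le E v u"
    proof (rule ccontr)
      assume "\<not> anc_le E v u"
      hence "(u,v) \<notin> E\<^sup>*" unfolding anc_le_def by simp
      hence "(v,u) \<in> E\<^sup>*" "v \<noteq> u" using chain[OF va ua] by auto
      hence "(v,u) \<in> E\<^sup>+" by (simp add: rtrancl_eq_or_trancl)
      then obtain c where c1: "(v,c) \<in> E" and c2: "(c,u) \<in> E\<^sup>*" by (meson tranclD)
      have "c = ca" using child_uniq[OF c1 assms(1) _ assms(3)] c2 ua by (meson rtrancl_trans)
      moreover have "c = cb" using child_uniq[OF c1 assms(2) _ assms(4)] c2 ub by (meson rtrancl_trans)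
      ultimately show False using assms(5) by simp
    qed
  qed
qed

lemma F1:
  assumes "(v,ca) \<in> E" "(v,cb) \<in> E" "(ca,a) \<in> E\<^sup>*" "(cb,b) \<in> E\<^sup>*" "ca \<noteq> cb"
    and aL: "a \<in> leaves V E rt" and bm: "best_match V E rt \<sigma> a b"
  shows "\<not> Hc V E rt \<sigma> ca (\<sigma> b)"
proof
  assume "Hc V E rt \<sigma> ca (\<sigma> b)"
  then obtain y where yL: "y \<in> leaves V E rt" and ys: "\<sigma> y = \<sigma> b" and cy: "(ca,y) \<in> E\<^sup>*"
    unfolding Hc_def by blast
  have lv: "lca V E {a,b} = v" using lca_pair assms by blast
  have h1: "anc_le E v (lca V E {a,y})" using bm yL ys lv unfolding best_match_def by auto
  have aV: "a \<in> V" "y \<in> V" using aL yL unfolding leaves_def by auto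
  have caV: "ca \<in> V" using EV assms by blast
  have h2: "\<forall>x\<in>{a,y}. anc_le E x ca" using assms(3) cy unfolding anc_le_def by blast
  have "{a,y} \<subseteq> V" "{a,y} \<noteq> {}" using aV by auto
  hence "anc_le E (lca V E {a,y}) ca" using lca_prop caV h2 by blast
  hence "(ca,v) \<in> E\<^sup>*" using h1 unfolding anc_le_def by (meson rtrancl_trans)
  hence "(v,v) \<in> E\<^sup>+" using assms(1) by auto
  thus False using no_cycle by blast
qed

lemma F2:
  assumes "(v,ca) \<in> E" "(v,cb) \<in> E" "(ca,a) \<in> E\<^sup>*" "(cb,b) \<in> E\<^sup>*" "ca \<noteq> cb"
    and aL: "a \<in> leaves V E rt" and bL: "b \<in> leaves V E rt" and sab: "\<sigma> a \<noteq> \<sigma> b"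
    and nH: "\<not> Hc V E rt \<sigma> ca (\<sigma> b)"
  shows "best_match V E rt \<sigma> a b"
  unfolding best_match_def
proof (intro conjI aL bL sab ballI impI)
  fix y assume yL: "y \<in> leaves V E rt" and ys: "\<sigma> y = \<sigma> b"
  have lv: "lca V E {a,b} = v" using lca_pair assms by blast
  have aV: "a \<in> V" "y \<in> V" using aL yL unfolding leaves_def by auto
  define w where "w = lca V E {a,y}"
  have "{a,y} \<subseteq> V" "{a,y} \<noteq> {}" using aV by auto
  note lp = lca_prop[OF this]
  have wp: "w \<in> V" "(w,a) \<in> E\<^sup>*" "(w,y) \<in> E\<^sup>*" using lp
    unfolding w_def anc_le_def by auto
  have va: "(v,a) \<in> E\<^sup>*" using assms by (meson converse_rtrancl_into_rtrancl)
  show "anc_le E (lca V E {a, b}) (lca V E {a, y})"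
    unfolding lv w_def[symmetric] anc_le_def
  proof (rule ccontr)
    assume "(w,v) \<notin> E\<^sup>*"
    hence "(v,w) \<in> E\<^sup>*" "v \<noteq> w" using chain[OF va wp(2)] by auto
    hence "(v,w) \<in> E\<^sup>+" by (simp add: rtrancl_eq_or_trancl)
    then obtain c where c1: "(v,c) \<in> E" and c2: "(c,w) \<in> E\<^sup>*" by (meson tranclD)
    have "c = ca" using child_uniq[OF c1 assms(1) _ assms(3)] c2 wp by (meson rtrancl_trans)
    hence "(ca,y) \<in> E\<^sup>*" using c2 wp by (meson rtrancl_trans)
    thus False using nH yL ys unfolding Hc_def by blast
  qed
qed


lemma leaf_below: "a \<in> leaves V E rt \<Longrightarrow> (a,b) \<in> E\<^sup>* \<Longrightarrow> b = a"
  by (metis (mono_tags, lifting) children_def empty_iff leaves_def mem_Collect_eq rtranclE converse_rtranclE)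

lemma below_child:
  assumes "a \<in> leaves V E rt" "b \<in> leaves V E rt" "a \<noteq> b" "(v,a) \<in> E\<^sup>*" "(v,b) \<in> E\<^sup>*"
  shows "\<exists>c. (v,c) \<in> E \<and> (c,a) \<in> E\<^sup>*"
proof -
  have "v \<noteq> a" using leaf_below assms by metis
  hence "(v,a) \<in> E\<^sup>+" using assms(4) by (simp add: rtrancl_eq_or_trancl)
  thus ?thesis by (meson tranclD)
qed

lemma Epair:
  assumes "(v,ca) \<in> E" "(v,cb) \<in> E" "(ca,a) \<in> E\<^sup>*" "(cb,b) \<in> E\<^sup>*"
    "a \<in> leaves V E rt" "b \<in> leaves V E rt" "best_match V E rt \<sigma> a b" "best_match V E rt \<sigma> b a"
  shows "ca \<noteq> cb \<Longrightarrow> \<not> Hc V E rt \<sigma> ca (\<sigma> b) \<and> \<not> Hc V E rt \<sigma> cb (\<sigma> a)"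
  using F1[OF assms(1,2,3,4) _ assms(5,7)] F1[OF assms(2,1,4,3) _ assms(6,8)] by metis

lemma Npair:
  assumes "(v,ca) \<in> E" "(v,cb) \<in> E" "(ca,a) \<in> E\<^sup>*" "(cb,b) \<in> E\<^sup>*"
    "a \<in> leaves V E rt" "b \<in> leaves V E rt" "\<sigma> a \<noteq> \<sigma> b"
    "\<not> (best_match V E rt \<sigma> a b \<and> best_match V E rt \<sigma> b a)"
  shows "ca \<noteq> cb \<Longrightarrow> Hc V E rt \<sigma> ca (\<sigma> b) \<or> Hc V E rt \<sigma> cb (\<sigma> a)"
  using F2[OF assms(1,2,3,4) _ assms(5,6,7)] F2[OF assms(2,1,4,3) _ assms(6,5)] assms(7,8) by metis

end

lemma comb:
  fixes c1 c2 c3 c4 c5 c6 :: 'a and r s t :: 'c and H :: "'a \<Rightarrow> 'c \<Rightarrow> bool"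
  assumes "r \<noteq> s" "r \<noteq> t" "s \<noteq> t"
  and h: "H c1 r" "H c2 s" "H c3 t" "H c4 r" "H c5 s" "H c6 t"
  and e1: "c1 \<noteq> c2 \<Longrightarrow> \<not> H c1 s \<and> \<not> H c2 r"
  and e2: "c2 \<noteq> c3 \<Longrightarrow> \<not> H c2 t \<and> \<not> H c3 s"
  and e3: "c3 \<noteq> c4 \<Longrightarrow> \<not> H c3 r \<and> \<not> H c4 t"
  and e4: "c4 \<noteq> c5 \<Longrightarrow> \<not> H c4 s \<and> \<not> H c5 r"
  and e5: "c5 \<noteq> c6 \<Longrightarrow> \<not> H c5 t \<and> \<not> H c6 s"
  and e6: "c6 \<noteq> c1 \<Longrightarrow> \<not> H c6 r \<and> \<not> H c1 t"
  and n1: "c1 \<noteq> c3 \<Longrightarrow> H c1 t \<or> H c3 r"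
  and n2: "c1 \<noteq> c5 \<Longrightarrow> H c1 s \<or> H c5 r"
  and n3: "c2 \<noteq> c4 \<Longrightarrow> H c2 r \<or> H c4 s"
  and n4: "c2 \<noteq> c6 \<Longrightarrow> H c2 t \<or> H c6 s"
  and n5: "c3 \<noteq> c5 \<Longrightarrow> H c3 s \<or> H c5 t"
  and n6: "c4 \<noteq> c6 \<Longrightarrow> H c4 t \<or> H c6 r"
  and f3: "\<not> (c1 = c2 \<and> c2 = c3 \<and> c3 = c4 \<and> c4 = c5 \<and> c5 = c6)"
  shows "(c1 = c2 \<and> c3 = c4 \<and> c5 = c6 \<and> c1 \<noteq> c3 \<and> c1 \<noteq> c5 \<and> c3 \<noteq> c5) \<or>
         (c2 = c3 \<and> c4 = c5 \<and> c6 = c1 \<and> c2 \<noteq> c4 \<and> c2 \<noteq> c6 \<and> c4 \<noteq> c6)"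
  using assms by (cases "c1 = c2"; cases "c2 = c3"; cases "c3 = c4"; cases "c4 = c5"; cases "c5 = c6"; cases "c6 = c1"; metis)

theorem mainTheorem18:
  fixes X :: "'v set" and EG :: "('v \<times> 'v) set" and \<sigma> :: "'v \<Rightarrow> 'c"
    and r s t :: 'c and x1 y1 z1 x2 y2 z2 :: 'v
  assumes rbmg: "is_RBMG X EG \<sigma>"
    and conn: "graph_connected X EG"
    and colors: "\<sigma> ` X = {r, s, t}" "r \<noteq> s" "r \<noteq> t" "s \<noteq> t"
    and cyc: "induced_6cycle X EG [x1, y1, z1, x2, y2, z2]"
    and cx: "\<sigma> x1 = r" "\<sigma> x2 = r"
    and cy: "\<sigma> y1 = s" "\<sigma> y2 = s"
    and cz: "\<sigma> z1 = t" "\<sigma> z2 = t"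
  shows "\<forall>V E rt. explains V E rt \<sigma> X EG \<longrightarrow>
    (let v = lca V E {x1, x2, y1, y2, z1, z2} in
     \<exists>v1\<in>children E v. \<exists>v2\<in>children E v. \<exists>v3\<in>children E v.
       v1 \<noteq> v2 \<and> v1 \<noteq> v3 \<and> v2 \<noteq> v3 \<and>
       ((anc_le E x1 v1 \<and> anc_le E y1 v1 \<and> anc_le E x2 v2 \<and> anc_le E z1 v2
          \<and> anc_le E y2 v3 \<and> anc_le E z2 v3)
        \<or> (anc_le E y1 v1 \<and> anc_le E z1 v1 \<and> anc_le E x2 v2 \<and> anc_le E y2 v2
          \<and> anc_le E x1 v3 \<and> anc_le E z2 v3)))"
proof (intro allI impI)
  fix V E rt assume ex: "explains V E rt \<sigma> X EG"
  have RT: "rooted_tree V E rt" and XL: "X = leaves V E rt"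
    and EGi: "\<And>x y. (x, y) \<in> EG \<longleftrightarrow> best_match V E rt \<sigma> x y \<and> best_match V E rt \<sigma> y x"
    using ex unfolding explains_def planted_phylo_tree_def by auto
  let ?cs = "[x1, y1, z1, x2, y2, z2]"
  have dist: "distinct ?cs" and sub: "set ?cs \<subseteq> X"
    and ed: "\<And>i j. i < 6 \<Longrightarrow> j < 6 \<Longrightarrow> (?cs ! i, ?cs ! j) \<in> EG \<longleftrightarrow> (j = (i + 1) mod 6 \<or> i = (j + 1) mod 6)"
    using cyc unfolding induced_6cycle_def by auto
  have E1: "(x1,y1) \<in> EG" using ed[of 0 1] by simp
  have E2: "(y1,z1) \<in> EG" using ed[of 1 2] by simp
  have E3: "(z1,x2) \<in> EG" using ed[of 2 3] by simp
  have E4: "(x2,y2) \<in> EG" using ed[of 3 4] by simp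
  have E5: "(y2,z2) \<in> EG" using ed[of 4 5] by simp
  have E6: "(z2,x1) \<in> EG" using ed[of 5 0] by simp
  have N1: "(x1,z1) \<notin> EG" using ed[of 0 2] by simp
  have N2: "(x1,y2) \<notin> EG" using ed[of 0 4] by simp
  have N3: "(y1,x2) \<notin> EG" using ed[of 1 3] by simp
  have N4: "(y1,z2) \<notin> EG" using ed[of 1 5] by simp
  have N5: "(z1,y2) \<notin> EG" using ed[of 2 4] by simp
  have N6: "(x2,z2) \<notin> EG" using ed[of 3 5] by simp
  have L: "x1 \<in> leaves V E rt" "y1 \<in> leaves V E rt" "z1 \<in> leaves V E rt"
     "x2 \<in> leaves V E rt" "y2 \<in> leaves V E rt" "z2 \<in> leaves V E rt" using sub XL by auto
  define A where "A = {x1, x2, y1, y2, z1, z2}"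
  have AV: "A \<subseteq> V" "A \<noteq> {}" using L unfolding A_def leaves_def by auto
  define v where "v = lca V E A"
  have vp: "v \<in> V" "\<forall>a\<in>A. anc_le E a v" "\<forall>u\<in>V. (\<forall>a\<in>A. anc_le E a u) \<longrightarrow> anc_le E v u"
    using lca_prop[OF RT AV] unfolding v_def by auto
  have va: "(v,x1) \<in> E\<^sup>*" "(v,y1) \<in> E\<^sup>*" "(v,z1) \<in> E\<^sup>*" "(v,x2) \<in> E\<^sup>*" "(v,y2) \<in> E\<^sup>*" "(v,z2) \<in> E\<^sup>*"
    using vp(2) unfolding A_def anc_le_def by auto
  have dd: "x1 \<noteq> y1" "y1 \<noteq> x1" using dist by auto
  obtain c1 where c1: "(v,c1) \<in> E" "(c1,x1) \<in> E\<^sup>*" using below_child[OF RT L(1) L(2) _ va(1) va(2)] dist by auto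
  obtain c2 where c2: "(v,c2) \<in> E" "(c2,y1) \<in> E\<^sup>*" using below_child[OF RT L(2) L(1) _ va(2) va(1)] dist by auto
  obtain c3 where c3: "(v,c3) \<in> E" "(c3,z1) \<in> E\<^sup>*" using below_child[OF RT L(3) L(1) _ va(3) va(1)] dist by auto
  obtain c4 where c4: "(v,c4) \<in> E" "(c4,x2) \<in> E\<^sup>*" using below_child[OF RT L(4) L(1) _ va(4) va(1)] dist by auto
  obtain c5 where c5: "(v,c5) \<in> E" "(c5,y2) \<in> E\<^sup>*" using below_child[OF RT L(5) L(1) _ va(5) va(1)] dist by auto
  obtain c6 where c6: "(v,c6) \<in> E" "(c6,z2) \<in> E\<^sup>*" using below_child[OF RT L(6) L(1) _ va(6) va(1)] dist by auto
  let ?H = "Hc V E rt \<sigma>"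
  have h: "?H c1 r" "?H c2 s" "?H c3 t" "?H c4 r" "?H c5 s" "?H c6 t"
    using L c1 c2 c3 c4 c5 c6 cx cy cz unfolding Hc_def by auto
  have e1: "c1 \<noteq> c2 \<Longrightarrow> \<not> ?H c1 s \<and> \<not> ?H c2 r"
    using Epair[OF RT c1(1) c2(1) c1(2) c2(2) L(1) L(2)] E1 EGi cx cy by metis
  have e2: "c2 \<noteq> c3 \<Longrightarrow> \<not> ?H c2 t \<and> \<not> ?H c3 s"
    using Epair[OF RT c2(1) c3(1) c2(2) c3(2) L(2) L(3)] E2 EGi cz cy by metis
  have e3: "c3 \<noteq> c4 \<Longrightarrow> \<not> ?H c3 r \<and> \<not> ?H c4 t"
    using Epair[OF RT c3(1) c4(1) c3(2) c4(2) L(3) L(4)] E3 EGi cx cz by metis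
  have e4: "c4 \<noteq> c5 \<Longrightarrow> \<not> ?H c4 s \<and> \<not> ?H c5 r"
    using Epair[OF RT c4(1) c5(1) c4(2) c5(2) L(4) L(5)] E4 EGi cx cy by metis
  have e5: "c5 \<noteq> c6 \<Longrightarrow> \<not> ?H c5 t \<and> \<not> ?H c6 s"
    using Epair[OF RT c5(1) c6(1) c5(2) c6(2) L(5) L(6)] E5 EGi cz cy by metis
  have e6: "c6 \<noteq> c1 \<Longrightarrow> \<not> ?H c6 r \<and> \<not> ?H c1 t"
    using Epair[OF RT c6(1) c1(1) c6(2) c1(2) L(6) L(1)] E6 EGi cx cz by metis
  have n1: "c1 \<noteq> c3 \<Longrightarrow> ?H c1 t \<or> ?H c3 r"
    using Npair[OF RT c1(1) c3(1) c1(2) c3(2) L(1) L(3)] N1 EGi cx cz colors by metis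
  have n2: "c1 \<noteq> c5 \<Longrightarrow> ?H c1 s \<or> ?H c5 r"
    using Npair[OF RT c1(1) c5(1) c1(2) c5(2) L(1) L(5)] N2 EGi cx cy colors by metis
  have n3: "c2 \<noteq> c4 \<Longrightarrow> ?H c2 r \<or> ?H c4 s"
    using Npair[OF RT c2(1) c4(1) c2(2) c4(2) L(2) L(4)] N3 EGi cx cy colors by metis
  have n4: "c2 \<noteq> c6 \<Longrightarrow> ?H c2 t \<or> ?H c6 s"
    using Npair[OF RT c2(1) c6(1) c2(2) c6(2) L(2) L(6)] N4 EGi cz cy colors by metis
  have n5: "c3 \<noteq> c5 \<Longrightarrow> ?H c3 s \<or> ?H c5 t"
    using Npair[OF RT c3(1) c5(1) c3(2) c5(2) L(3) L(5)] N5 EGi cz cy colors by metis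
  have n6: "c4 \<noteq> c6 \<Longrightarrow> ?H c4 t \<or> ?H c6 r"
    using Npair[OF RT c4(1) c6(1) c4(2) c6(2) L(4) L(6)] N6 EGi cx cz colors by metis
  have f3: "\<not> (c1 = c2 \<and> c2 = c3 \<and> c3 = c4 \<and> c4 = c5 \<and> c5 = c6)"
  proof
    assume eq: "c1 = c2 \<and> c2 = c3 \<and> c3 = c4 \<and> c4 = c5 \<and> c5 = c6"
    have "c1 \<in> V" using EV[OF RT c1(1)] by blast
    moreover have "\<forall>a\<in>A. anc_le E a c1" using eq c1 c2 c3 c4 c5 c6 unfolding A_def anc_le_def by auto
    ultimately have "(c1,v) \<in> E\<^sup>*" using vp(3) unfolding anc_le_def by blast
    hence "(v,v) \<in> E\<^sup>+" using c1(1) by auto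
    thus False using no_cycle[OF RT] by blast
  qed
  have C: "(c1 = c2 \<and> c3 = c4 \<and> c5 = c6 \<and> c1 \<noteq> c3 \<and> c1 \<noteq> c5 \<and> c3 \<noteq> c5) \<or>
         (c2 = c3 \<and> c4 = c5 \<and> c6 = c1 \<and> c2 \<noteq> c4 \<and> c2 \<noteq> c6 \<and> c4 \<noteq> c6)"
    by (rule comb[OF colors(2,3,4) h e1 e2 e3 e4 e5 e6 n1 n2 n3 n4 n5 n6 f3])
  show "let v = lca V E {x1, x2, y1, y2, z1, z2} in
     \<exists>v1\<in>children E v. \<exists>v2\<in>children E v. \<exists>v3\<in>children E v.
       v1 \<noteq> v2 \<and> v1 \<noteq> v3 \<and> v2 \<noteq> v3 \<and>
       ((anc_le E x1 v1 \<and> anc_le E y1 v1 \<and> anc_le E x2 v2 \<and> anc_le E z1 v2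
          \<and> anc_le E y2 v3 \<and> anc_le E z2 v3)
        \<or> (anc_le E y1 v1 \<and> anc_le E z1 v1 \<and> anc_le E x2 v2 \<and> anc_le E y2 v2
          \<and> anc_le E x1 v3 \<and> anc_le E z2 v3))"
    unfolding Let_def A_def[symmetric] v_def[symmetric]
  proof -
    have ch: "c1 \<in> children E v" "c2 \<in> children E v" "c3 \<in> children E v"
      "c4 \<in> children E v" "c5 \<in> children E v" "c6 \<in> children E v"
      using c1 c2 c3 c4 c5 c6 unfolding children_def by auto
    show "\<exists>v1\<in>children E v. \<exists>v2\<in>children E v. \<exists>v3\<in>children E v.
       v1 \<noteq> v2 \<and> v1 \<noteq> v3 \<and> v2 \<noteq> v3 \<and>
       ((anc_le E x1 v1 \<and> anc_le E y1 v1 \<and> anc_le E x2 v2 \<and> anc_le E z1 v2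
          \<and> anc_le E y2 v3 \<and> anc_le E z2 v3)
        \<or> (anc_le E y1 v1 \<and> anc_le E z1 v1 \<and> anc_le E x2 v2 \<and> anc_le E y2 v2
          \<and> anc_le E x1 v3 \<and> anc_le E z2 v3))"
    proof (cases "c1 = c2 \<and> c3 = c4 \<and> c5 = c6 \<and> c1 \<noteq> c3 \<and> c1 \<noteq> c5 \<and> c3 \<noteq> c5")
      case True
      thus ?thesis using ch c1 c2 c3 c4 c5 c6 unfolding anc_le_def
        by (intro bexI[of _ c1] bexI[of _ c3] bexI[of _ c5]) auto
    next
      case False
      hence "c2 = c3 \<and> c4 = c5 \<and> c6 = c1 \<and> c2 \<noteq> c4 \<and> c2 \<noteq> c6 \<and> c4 \<noteq> c6" using C by blast
      thus ?thesis using ch c1 c2 c3 c4 c5 c6 unfolding anc_le_def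
        by (intro bexI[of _ c2] bexI[of _ c4] bexI[of _ c6]) auto
    qed
  qed
qed

end
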